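(* Let $\ell\ge2$, $n\ge1$ and $N=\lfloor n/\ell\rfloor$. Let $\tilde e_j$ ($0\le j\le\ell-1$) be the Misra–Miwa Kashiwara operators on partitions and $\varepsilon_j(\mu)=\max\{k\ge0:\tilde e_j^{\,k}\mu\neq0\}$. (1) If $n\not\equiv0\pmod\ell$, then for $0\le i\le N$: $\tilde e_j(\mu_i^{(n)})=0$ if $j\not\equiv n-1\pmod\ell$, and $\tilde e_j(\mu_i^{(n)})=\mu_i^{(n-1)}$ if $j\equiv n-1\pmod\ell$. (2) If $n\equiv0\pmod\ell$, then for $1\le i\le N$: $\tilde e_j(\mu_i^{(n)})=0$ if $j\not\equiv n-1$, and $\tilde e_j(\mu_i^{(n)})=\mu_{i-1}^{(n-1)}$ if $j\equiv n-1\pmod\ell$; and $\tilde e_j(\mu_0^{(n)})=0$ for all $0\le j\le\ell-1$. (3) For $1\le i\le N$, $\varepsilon_j(\mu_i^{(n)})=1$ if $j\equiv n-1\pmod\ell$ and $0$ otherwise; and $\varepsilon_j(\mu_0^{(n)})=1$ if $j\equiv n-1\pmod\ell$ and $n\not\equiv0\pmod\ell$, and $0$ otherwise.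
   Context: Partitions $\mu_i^{(k)}$ for $k\ge1$, $N_k=\lfloor k/\ell\rfloor$: $\mu_0^{(k)}=(k)$; for $1\le i\le N_k$, with $a=(\ell-1)+(N_k-i)\ell$, $m=k-a=b(\ell-1)+c$, $0\le c<\ell-1$, $\mu_i^{(k)}=(a,(\ell-1)^b,c)$ (omit $c$ if $0$). The box in row $a$, column $b$ of a Young diagram has $\ell$-residue $b-a\bmod\ell$. A box is removable (resp. addable) for $\lambda$ if removing it from (resp. adding it to) $\lambda$ gives a partition; it is $i$-removable/$i$-addable if its residue is $i$. Reading the $i$-addable and $i$-removable boxes of $\lambda$ from the bottom row up gives a word in $A$ (addable) and $R$ (removable); delete occurrences of $AR$ repeatedly until none remain. If an $R$ remains, the $i$-good box is the removable box corresponding to the rightmost remaining $R$, and $\tilde e_i\lambda=\lambda$ minus that box; otherwise $\tilde e_i\lambda=0$. *)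

theory Defs
  imports Main
begin

text \<open>Boxes are pairs (row, column), both 1-indexed; rows are listed top to bottom
  (English convention), so the bottom row has the largest index.\<close>

definition is_partition :: "nat list \<Rightarrow> bool" where
  "is_partition la \<longleftrightarrow> sorted_wrt (\<ge>) la \<and> (\<forall>x\<in>set la. 0 < x)"

definition diagram :: "nat list \<Rightarrow> (nat \<times> nat) set" where
  "diagram la = {(r, c). 1 \<le> r \<and> r \<le> length la \<and> 1 \<le> c \<and> c \<le> la ! (r - 1)}"

definition removable :: "nat list \<Rightarrow> nat \<times> nat \<Rightarrow> bool" where
  "removable la b \<longleftrightarrow> b \<in> diagram la \<and>
     (\<exists>mu. is_partition mu \<and> diagram mu = diagram la - {b})"

definition addable :: "nat list \<Rightarrow> nat \<times> nat \<Rightarrow> bool" where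
  "addable la b \<longleftrightarrow> b \<notin> diagram la \<and>
     (\<exists>mu. is_partition mu \<and> diagram mu = insert b (diagram la))"

definition residue :: "nat \<Rightarrow> nat \<times> nat \<Rightarrow> int" where
  "residue l b = (int (snd b) - int (fst b)) mod int l"

datatype sgn = Add | Rem

definition row_word :: "nat \<Rightarrow> nat \<Rightarrow> nat list \<Rightarrow> nat \<Rightarrow> (sgn \<times> (nat \<times> nat)) list" where
  "row_word l i la r =
     map (\<lambda>c. (Add, (r, c))) (sorted_list_of_set {c. addable la (r, c) \<and> residue l (r, c) = int i})
   @ map (\<lambda>c. (Rem, (r, c))) (sorted_list_of_set {c. removable la (r, c) \<and> residue l (r, c) = int i})"

text \<open>i-addable / i-removable boxes read from the bottom row up
  (rows length+1, length, ..., 1; no box of row > length+1 is addable).\<close>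
definition sig_word :: "nat \<Rightarrow> nat \<Rightarrow> nat list \<Rightarrow> (sgn \<times> (nat \<times> nat)) list" where
  "sig_word l i la = concat (map (row_word l i la) (rev [1..<length la + 2]))"

fun del_first_AR :: "(sgn \<times> 'b) list \<Rightarrow> (sgn \<times> 'b) list option" where
  "del_first_AR (x # y # xs) =
     (if fst x = Add \<and> fst y = Rem then Some xs
      else map_option (Cons x) (del_first_AR (y # xs)))"
| "del_first_AR _ = None"

definition del_step :: "(sgn \<times> 'b) list \<Rightarrow> (sgn \<times> 'b) list" where
  "del_step w = (case del_first_AR w of None \<Rightarrow> w | Some w' \<Rightarrow> w')"

text \<open>Repeatedly delete occurrences of A R until none remain
  (length w iterations always suffice, since each deletion shortens the word).\<close>
definition reduce_word :: "(sgn \<times> 'b) list \<Rightarrow> (sgn \<times> 'b) list" where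
  "reduce_word w = (del_step ^^ length w) w"

definition good_box :: "nat \<Rightarrow> nat \<Rightarrow> nat list \<Rightarrow> (nat \<times> nat) option" where
  "good_box l i la =
     (let w = reduce_word (sig_word l i la) in
      if \<exists>x\<in>set w. fst x = Rem
      then Some (snd (last (filter (\<lambda>x. fst x = Rem) w)))
      else None)"

definition remove_box :: "nat list \<Rightarrow> nat \<times> nat \<Rightarrow> nat list" where
  "remove_box la b = filter (\<lambda>x. 0 < x) (la[fst b - 1 := la ! (fst b - 1) - 1])"

text \<open>Kashiwara operator e~_i; the value 0 is represented by None.\<close>
definition etilde :: "nat \<Rightarrow> nat \<Rightarrow> nat list \<Rightarrow> nat list option" where
  "etilde l i la = map_option (remove_box la) (good_box l i la)"

definition etilde_pow :: "nat \<Rightarrow> nat \<Rightarrow> nat \<Rightarrow> nat list \<Rightarrow> nat list option" where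
  "etilde_pow l i k la = ((\<lambda>x. Option.bind x (etilde l i)) ^^ k) (Some la)"

definition epsilon :: "nat \<Rightarrow> nat \<Rightarrow> nat list \<Rightarrow> nat" where
  "epsilon l i la = (GREATEST k. etilde_pow l i k la \<noteq> None)"

text \<open>mu l k i = mu_i^(k); mu_0^(0) is the empty partition.\<close>
definition mu :: "nat \<Rightarrow> nat \<Rightarrow> nat \<Rightarrow> nat list" where
  "mu l k i =
     (if i = 0 then (if k = 0 then [] else [k])
      else (let a = (l - 1) + (k div l - i) * l; m = k - a;
                b = m div (l - 1); c = m mod (l - 1)
            in a # replicate b (l - 1) @ (if c = 0 then [] else [c])))"

end

theory Submission
  imports Defs
begin


definition rowlen :: "nat list \<Rightarrow> nat \<Rightarrow> nat" where
  "rowlen la r = (if 1 \<le> r \<and> r \<le> length la then la ! (r - 1) else 0)"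

lemma diagram_rowlen: "diagram la = {(r, c). 1 \<le> r \<and> 1 \<le> c \<and> c \<le> rowlen la r}"
  unfolding diagram_def rowlen_def by (auto split: if_splits)

lemma part_iff: "is_partition la \<longleftrightarrow>
   (\<forall>r\<ge>1. rowlen la (Suc r) \<le> rowlen la r) \<and> (\<forall>r. 1 \<le> r \<and> r \<le> length la \<longrightarrow> 0 < rowlen la r)"
proof -
  have s: "sorted_wrt (\<ge>) la \<longleftrightarrow> (\<forall>i. Suc i < length la \<longrightarrow> la ! Suc i \<le> la ! i)"
    by (subst sorted_wrt_iff_nth_Suc_transp) (auto simp: transp_def)
  have p: "(\<forall>x\<in>set la. 0 < x) \<longleftrightarrow> (\<forall>i<length la. 0 < la ! i)"
    by (auto simp: in_set_conv_nth)
  have a: "(\<forall>i. Suc i < length la \<longrightarrow> la ! Suc i \<le> la ! i) \<longleftrightarrow> (\<forall>r\<ge>1. rowlen la (Suc r) \<le> rowlen la r)"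
  proof
    assume h: "\<forall>i. Suc i < length la \<longrightarrow> la ! Suc i \<le> la ! i"
    show "\<forall>r\<ge>1. rowlen la (Suc r) \<le> rowlen la r"
    proof (intro allI impI)
      fix r :: nat assume "1 \<le> r"
      then obtain i where i: "r = Suc i" by (cases r) auto
      show "rowlen la (Suc r) \<le> rowlen la r" using h[rule_format, of i] unfolding rowlen_def i by simp
    qed
  next
    assume h: "\<forall>r\<ge>1. rowlen la (Suc r) \<le> rowlen la r"
    show "\<forall>i. Suc i < length la \<longrightarrow> la ! Suc i \<le> la ! i"
    proof (intro allI impI)
      fix i assume "Suc i < length la"
      then show "la ! Suc i \<le> la ! i" using h[rule_format, of "Suc i"] unfolding rowlen_def by simp
    qed
  qed
  have b: "(\<forall>i<length la. 0 < la ! i) \<longleftrightarrow> (\<forall>r. 1 \<le> r \<and> r \<le> length la \<longrightarrow> 0 < rowlen la r)"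
  proof
    assume h: "\<forall>i<length la. 0 < la ! i"
    show "\<forall>r. 1 \<le> r \<and> r \<le> length la \<longrightarrow> 0 < rowlen la r"
    proof (intro allI impI)
      fix r assume "1 \<le> r \<and> r \<le> length la"
      moreover have "r - 1 < length la" using calculation by arith
      ultimately show "0 < rowlen la r" using h unfolding rowlen_def by simp
    qed
  next
    assume h: "\<forall>r. 1 \<le> r \<and> r \<le> length la \<longrightarrow> 0 < rowlen la r"
    show "\<forall>i<length la. 0 < la ! i"
    proof (intro allI impI)
      fix i assume "i < length la"
      then show "0 < la ! i" using h[rule_format, of "Suc i"] unfolding rowlen_def by simp
    qed
  qed
  show ?thesis unfolding is_partition_def s p a b ..
qed

lemma rowlen_0[simp]: "rowlen la 0 = 0" by (simp add: rowlen_def)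

lemma rowlen_update: "k < length la \<Longrightarrow> rowlen (la[k := v]) r = (if r = Suc k then v else rowlen la r)"
  unfolding rowlen_def by (auto simp: nth_list_update)

lemma rowlen_snoc: "rowlen (la @ [v]) r = (if r = Suc (length la) then v else rowlen la r)"
  unfolding rowlen_def by (auto simp: nth_append)

lemma rowlen_butlast: "la \<noteq> [] \<Longrightarrow> rowlen (butlast la) r = (if r = length la then 0 else rowlen la r)"
  unfolding rowlen_def by (auto simp: nth_butlast)

lemma rowlen_pos: "is_partition la \<Longrightarrow> 0 < rowlen la r \<longleftrightarrow> 1 \<le> r \<and> r \<le> length la"
  using part_iff[of la] unfolding rowlen_def by (auto split: if_splits)

lemma rowlen_mono: assumes "is_partition la" "1 \<le> r" "r \<le> r'" shows "rowlen la r' \<le> rowlen la r"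
  using assms(3) proof (induction r' rule: dec_induct)
  case base then show ?case by simp
next
  case (step k) then show ?case using part_iff[of la] assms by (meson order_trans)
qed

lemma mk_part_rem:
  assumes P: "is_partition la" and r: "1 \<le> r" and c: "c = rowlen la r" "1 \<le> c" "rowlen la (Suc r) < c"
  shows "\<exists>mu. is_partition mu \<and> (\<forall>r'. rowlen mu r' = (if r' = r then c - 1 else rowlen la r'))"
proof -
  have rl: "r \<le> length la" using rowlen_pos[OF P, of r] c by simp
  have anti: "\<forall>r\<ge>1. rowlen la (Suc r) \<le> rowlen la r" using P part_iff by blast
  show ?thesis
  proof (cases "c = 1")
    case True
    have z: "rowlen la (Suc r) = 0" using c True by simp
    then have rlen: "r = length la" using rowlen_pos[OF P, of "Suc r"] rl by simp
    have ne: "la \<noteq> []" using rl r by auto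
    define mu where "mu = butlast la"
    have R: "\<forall>r'. rowlen mu r' = (if r' = r then c - 1 else rowlen la r')"
      unfolding mu_def using rowlen_butlast[OF ne] rlen True by simp
    have "is_partition mu" unfolding part_iff
    proof (intro conjI allI impI)
      fix r' :: nat assume "1 \<le> r'"
      then show "rowlen mu (Suc r') \<le> rowlen mu r'" using R anti True z by auto
    next
      fix r' assume "1 \<le> r' \<and> r' \<le> length mu"
      then show "0 < rowlen mu r'" using R rowlen_pos[OF P, of r'] rlen unfolding mu_def by auto
    qed
    then show ?thesis using R by blast
  next
    case False
    define mu where "mu = la[r - 1 := c - 1]"
    have k: "r - 1 < length la" using rl r by arith
    have R: "\<forall>r'. rowlen mu r' = (if r' = r then c - 1 else rowlen la r')"
      unfolding mu_def using rowlen_update[OF k] r by simp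
    have "is_partition mu" unfolding part_iff
    proof (intro conjI allI impI)
      fix r' :: nat assume r1: "1 \<le> r'"
      have "rowlen la (Suc r') \<le> rowlen la r'" using anti r1 by blast
      then show "rowlen mu (Suc r') \<le> rowlen mu r'" using R c by auto
    next
      fix r' assume "1 \<le> r' \<and> r' \<le> length mu"
      then show "0 < rowlen mu r'" using R rowlen_pos[OF P, of r'] False c unfolding mu_def by auto
    qed
    then show ?thesis using R by blast
  qed
qed

lemma removable_iff:
  assumes P: "is_partition la"
  shows "removable la (r, c) \<longleftrightarrow> 1 \<le> r \<and> 1 \<le> c \<and> c = rowlen la r \<and> rowlen la (Suc r) < c"
proof
  assume h: "removable la (r, c)"
  then have d: "(r, c) \<in> diagram la" and "\<exists>mu. is_partition mu \<and> diagram mu = diagram la - {(r, c)}"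
    unfolding removable_def by auto
  then obtain mu where mu: "is_partition mu" "diagram mu = diagram la - {(r, c)}" by blast
  have r: "1 \<le> r" "1 \<le> c" "c \<le> rowlen la r" using d by (auto simp: diagram_rowlen)
  have nd: "\<not> c \<le> rowlen mu r" using mu(2) r by (auto simp: diagram_rowlen)
  have "c = rowlen la r"
  proof (rule ccontr)
    assume "c \<noteq> rowlen la r"
    then have "(r, Suc c) \<in> diagram mu" using mu(2) r by (auto simp: diagram_rowlen)
    then show False using nd by (auto simp: diagram_rowlen)
  qed
  moreover have "rowlen la (Suc r) < c"
  proof (rule ccontr)
    assume "\<not> rowlen la (Suc r) < c"
    then have "(Suc r, c) \<in> diagram mu" using mu(2) r by (auto simp: diagram_rowlen)
    then have "c \<le> rowlen mu (Suc r)" by (auto simp: diagram_rowlen)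
    moreover have "rowlen mu (Suc r) \<le> rowlen mu r" using mu(1) r part_iff by blast
    ultimately show False using nd by simp
  qed
  ultimately show "1 \<le> r \<and> 1 \<le> c \<and> c = rowlen la r \<and> rowlen la (Suc r) < c" using r by simp
next
  assume h: "1 \<le> r \<and> 1 \<le> c \<and> c = rowlen la r \<and> rowlen la (Suc r) < c"
  then obtain mu where mu: "is_partition mu" "\<forall>r'. rowlen mu r' = (if r' = r then c - 1 else rowlen la r')"
    using mk_part_rem[OF P] by blast
  have "diagram mu = diagram la - {(r, c)}"
    unfolding diagram_rowlen using mu(2) h by (auto split: if_splits)
  moreover have "(r, c) \<in> diagram la" using h by (simp add: diagram_rowlen)
  ultimately show "removable la (r, c)" unfolding removable_def using mu(1) by blast
qed

lemma mk_part_add: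
  assumes P: "is_partition la" and r: "1 \<le> r" and c: "r = 1 \<or> rowlen la r + 1 \<le> rowlen la (r - 1)"
  shows "\<exists>mu. is_partition mu \<and> (\<forall>r'. rowlen mu r' = (if r' = r then rowlen la r + 1 else rowlen la r'))"
proof -
  have anti: "\<forall>r\<ge>1. rowlen la (Suc r) \<le> rowlen la r" using P part_iff by blast
  have rl: "r \<le> Suc (length la)"
  proof (cases "r = 1")
    case False
    then have "0 < rowlen la (r - 1)" using c by simp
    then have "r - 1 \<le> length la" using rowlen_pos[OF P, of "r - 1"] by simp
    then show ?thesis by arith
  qed simp
  show ?thesis
  proof (cases "r \<le> length la")
    case True
    define mu where "mu = la[r - 1 := rowlen la r + 1]"
    have k: "r - 1 < length la" using True r by arith
    have R: "\<forall>r'. rowlen mu r' = (if r' = r then rowlen la r + 1 else rowlen la r')"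
      unfolding mu_def using rowlen_update[OF k] r by simp
    have "is_partition mu" unfolding part_iff
    proof (intro conjI allI impI)
      fix r' :: nat assume r1: "1 \<le> r'"
      have "rowlen la (Suc r') \<le> rowlen la r'" using anti r1 by blast
      moreover have "Suc r' = r \<Longrightarrow> rowlen la r + 1 \<le> rowlen la r'" using c r1 by auto
      ultimately show "rowlen mu (Suc r') \<le> rowlen mu r'" using R by auto
    next
      fix r' assume "1 \<le> r' \<and> r' \<le> length mu"
      then show "0 < rowlen mu r'" using R rowlen_pos[OF P, of r'] unfolding mu_def by auto
    qed
    then show ?thesis using R by blast
  next
    case False
    then have rr: "r = Suc (length la)" using rl by simp
    then have z: "rowlen la r = 0" by (simp add: rowlen_def)
    define mu where "mu = la @ [1]"
    have R: "\<forall>r'. rowlen mu r' = (if r' = r then rowlen la r + 1 else rowlen la r')"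
      unfolding mu_def using rowlen_snoc rr z by simp
    have "is_partition mu" unfolding part_iff
    proof (intro conjI allI impI)
      fix r' :: nat assume r1: "1 \<le> r'"
      have "rowlen la (Suc r') \<le> rowlen la r'" using anti r1 by blast
      moreover have "Suc r' = r \<Longrightarrow> rowlen la r + 1 \<le> rowlen la r'" using c r1 by auto
      moreover have "r' = r \<Longrightarrow> rowlen la (Suc r') = 0" using rr by (simp add: rowlen_def)
      ultimately show "rowlen mu (Suc r') \<le> rowlen mu r'" using R by auto
    next
      fix r' assume "1 \<le> r' \<and> r' \<le> length mu"
      then show "0 < rowlen mu r'" using R rowlen_pos[OF P, of r'] rr unfolding mu_def by auto
    qed
    then show ?thesis using R by blast
  qed
qed

lemma addable_iff:
  assumes P: "is_partition la"
  shows "addable la (r, c) \<longleftrightarrow> 1 \<le> r \<and> c = rowlen la r + 1 \<and> (r = 1 \<or> c \<le> rowlen la (r - 1))"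
proof
  assume h: "addable la (r, c)"
  then have d: "(r, c) \<notin> diagram la" and "\<exists>mu. is_partition mu \<and> diagram mu = insert (r, c) (diagram la)"
    unfolding addable_def by auto
  then obtain mu where mu: "is_partition mu" "diagram mu = insert (r, c) (diagram la)" by blast
  have r: "1 \<le> r" "1 \<le> c" "c \<le> rowlen mu r" using mu(2) by (auto simp: diagram_rowlen)
  have gt: "rowlen la r < c" using d r by (auto simp: diagram_rowlen)
  have "c = rowlen la r + 1"
  proof (cases "c = 1")
    case False
    then have "(r, c - 1) \<in> diagram mu" using r by (auto simp: diagram_rowlen)
    then have "(r, c - 1) \<in> diagram la" using mu(2) False r by auto
    then have "c - 1 \<le> rowlen la r" by (auto simp: diagram_rowlen)
    then show ?thesis using gt by simp
  qed (use gt in simp)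
  moreover have "r = 1 \<or> c \<le> rowlen la (r - 1)"
  proof (cases "r = 1")
    case False
    then have "1 \<le> r - 1" using r by arith
    then have "rowlen mu (Suc (r - 1)) \<le> rowlen mu (r - 1)" using mu(1) part_iff by blast
    then have "rowlen mu r \<le> rowlen mu (r - 1)" using r by simp
    then have "(r - 1, c) \<in> diagram mu" using r False by (auto simp: diagram_rowlen)
    then have "(r - 1, c) \<in> diagram la" using mu(2) False r by auto
    then show ?thesis by (auto simp: diagram_rowlen)
  qed simp
  ultimately show "1 \<le> r \<and> c = rowlen la r + 1 \<and> (r = 1 \<or> c \<le> rowlen la (r - 1))" using r by simp
next
  assume h: "1 \<le> r \<and> c = rowlen la r + 1 \<and> (r = 1 \<or> c \<le> rowlen la (r - 1))"
  then obtain mu where mu: "is_partition mu" "\<forall>r'. rowlen mu r' = (if r' = r then rowlen la r + 1 else rowlen la r')"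
    using mk_part_add[OF P] by blast
  have "diagram mu = insert (r, c) (diagram la)"
    unfolding diagram_rowlen using mu(2) h by (auto split: if_splits)
  moreover have "(r, c) \<notin> diagram la" using h by (simp add: diagram_rowlen)
  ultimately show "addable la (r, c)" unfolding addable_def using mu(1) by blast
qed

definition addc :: "nat list \<Rightarrow> nat \<Rightarrow> bool" where
  "addc la r \<longleftrightarrow> 1 \<le> r \<and> (r = 1 \<or> rowlen la r + 1 \<le> rowlen la (r - 1))"
definition remc :: "nat list \<Rightarrow> nat \<Rightarrow> bool" where
  "remc la r \<longleftrightarrow> 1 \<le> r \<and> 1 \<le> rowlen la r \<and> rowlen la (Suc r) < rowlen la r"
definition fw :: "nat list \<Rightarrow> nat \<Rightarrow> (sgn \<times> (nat \<times> nat)) list" where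
  "fw la r = (if addc la r then [(Add, (r, rowlen la r + 1))] else [])
            @ (if remc la r then [(Rem, (r, rowlen la r))] else [])"

lemma row_word_fw:
  assumes P: "is_partition la"
  shows "row_word l i la r = filter (\<lambda>x. residue l (snd x) = int i) (fw la r)"
proof -
  have A: "{c. addable la (r, c) \<and> residue l (r, c) = int i} =
      (if addc la r \<and> residue l (r, rowlen la r + 1) = int i then {rowlen la r + 1} else {})"
    by (auto simp: addable_iff[OF P] addc_def)
  have R: "{c. removable la (r, c) \<and> residue l (r, c) = int i} =
      (if remc la r \<and> residue l (r, rowlen la r) = int i then {rowlen la r} else {})"
    by (auto simp: removable_iff[OF P] remc_def)
  show ?thesis unfolding row_word_def A R fw_def by simp
qed

lemma sig_word_fw:
  assumes P: "is_partition la"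
  shows "sig_word l i la = filter (\<lambda>x. residue l (snd x) = int i) (concat (map (fw la) (rev [1..<length la + 2])))"
  unfolding sig_word_def filter_concat map_map comp_def row_word_fw[OF P] ..




definition shp :: "nat \<Rightarrow> nat \<Rightarrow> nat \<Rightarrow> nat \<Rightarrow> nat list" where
  "shp L a b c = a # replicate b L @ (if c = 0 then [] else [c])"

lemma length_shp: "length (shp L a b c) = Suc b + (if c = 0 then 0 else 1)"
  by (simp add: shp_def)

lemma rowlen_shp: "rowlen (shp L a b c) r =
  (if r = 0 then 0 else if r = 1 then a else if r \<le> Suc b then L else if r = b + 2 then c else 0)"
  unfolding rowlen_def length_shp
  by (auto simp: shp_def nth_Cons' nth_append)

lemma part_shp: assumes "1 \<le> L" "L \<le> a" "c \<le> L" shows "is_partition (shp L a b c)"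
  unfolding part_iff length_shp rowlen_shp using assms by (auto split: if_splits)

locale shape =
  fixes L a b c :: nat
  assumes L1: "1 \<le> L" and La: "L \<le> a" and cL: "c < L"
begin

abbreviation "p \<equiv> shp L a b c"

lemma P: "is_partition p" using part_shp L1 La cL by simp

lemma fw3: "fw p (b + 3) = (if 0 < c then [(Add, (b + 3, 1))] else [])"
  unfolding fw_def addc_def remc_def rowlen_shp by auto

lemma fw2: "fw p (b + 2) = [(Add, (b + 2, c + 1))] @ (if 0 < c then [(Rem, (b + 2, c))] else [])"
  unfolding fw_def addc_def remc_def rowlen_shp using cL La by auto

lemma fw1: "fw p 1 = [(Add, (1, a + 1))] @ (if (if b = 0 then c else L) < a then [(Rem, (1, a))] else [])"
  unfolding fw_def addc_def remc_def rowlen_shp using cL La L1 by auto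

lemma fw_mid: "3 \<le> r \<Longrightarrow> r \<le> b \<Longrightarrow> fw p r = []"
  unfolding fw_def addc_def remc_def rowlen_shp by auto

lemma fw_top: "2 \<le> b \<Longrightarrow> fw p (b + 1) = [(Rem, (b + 1, L))]"
  unfolding fw_def addc_def remc_def rowlen_shp using cL La L1 by auto

lemma fw_2: "2 \<le> b \<Longrightarrow> fw p 2 = (if L < a then [(Add, (2, L + 1))] else [])"
  unfolding fw_def addc_def remc_def rowlen_shp using cL La L1 by auto

lemma fw_2b: "b = 1 \<Longrightarrow> fw p 2 = (if L < a then [(Add, (2, L + 1))] else []) @ [(Rem, (2, L))]"
  unfolding fw_def addc_def remc_def rowlen_shp using cL La L1 by auto

lemma W: "concat (map (fw p) (rev [1..<length p + 2])) =
   fw p (b + 3) @ fw p (b + 2) @ concat (map (fw p) (rev [2..<b + 2])) @ fw p 1"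
proof -
  have e: "rev [1..<b + 4] = [b + 3, b + 2] @ rev [2..<b + 2] @ [1]"
    by (simp add: upt_conv_Cons numeral_eq_Suc)
  show ?thesis
  proof (cases "c = 0")
    case True
    have e2: "rev [1..<b + 3] = [b + 2] @ rev [2..<b + 2] @ [1]"
      by (simp add: upt_conv_Cons numeral_eq_Suc)
    have eq: "length p + 2 = b + 3" using True by (simp add: length_shp)
    show ?thesis unfolding eq e2 fw3 using True by (simp del: upt_Suc)
  next
    case False
    have eq: "length p + 2 = b + 4" using False by (simp add: length_shp)
    show ?thesis unfolding eq e by (simp del: upt_Suc)
  qed
qed

lemma Mid0: "b = 0 \<Longrightarrow> concat (map (fw p) (rev [2..<b + 2])) = []" by simp

lemma Mid1: "b = 1 \<Longrightarrow> concat (map (fw p) (rev [2..<b + 2])) =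
   (if L < a then [(Add, (2, L + 1))] else []) @ [(Rem, (2, L))]"
proof -
  assume b: "b = 1"
  have "rev [2..<b + 2] = [2]" using b by simp
  then show ?thesis using fw_2b[OF b] by (simp del: upt_Suc)
qed

lemma Mid2: assumes "2 \<le> b" shows "concat (map (fw p) (rev [2..<b + 2])) =
   [(Rem, (b + 1, L))] @ (if L < a then [(Add, (2, L + 1))] else [])"
proof -
  have e: "rev [2..<b + 2] = [b + 1] @ rev [3..<b + 1] @ [2]"
  proof -
    obtain k where k: "b = Suc (Suc k)" using assms by (metis add_2_eq_Suc le_Suc_ex)
    have "[2..<b + 2] = [2] @ [3..<b + 1] @ [b + 1]" unfolding k
      by (simp add: upt_conv_Cons numeral_eq_Suc)
    then show ?thesis by simp
  qed
  have z: "concat (map (fw p) (rev [3..<b + 1])) = []"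
    using fw_mid by auto
  show ?thesis unfolding e using z fw_top[OF assms] fw_2[OF assms] by simp
qed

end




lemma mcong: "(x::int) = y \<Longrightarrow> x mod m = y mod m" by simp
lemma modeq: "(y::int) = x + k * int l \<Longrightarrow> y mod int l = x mod int l" by simp

locale shape2 = shape +
  fixes l n :: nat
  assumes l2: "2 \<le> l" and Ll: "L = l - 1" and amod: "a mod l = L" and nn: "n = a + b * L + c"
    and nz: "1 \<le> b \<or> 0 < c"
begin

definition "N1 = (n - 1) mod l"
definition "X = nat ((- int b - 2) mod int l)"
definition "Y = nat ((int c - int b - 1) mod int l)"

lemma lpos: "0 < int l" using l2 by simp
lemma iX: "int X = (- int b - 2) mod int l" unfolding X_def using lpos by simp
lemma iY: "int Y = (int c - int b - 1) mod int l" unfolding Y_def using lpos by simp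
lemma ia: "int a = int L + int l * int (a div l)"
proof -
  have "a = L + l * (a div l)" using div_mult_mod_eq[of a l] amod by (simp add: mult.commute)
  then show ?thesis by (metis of_nat_add of_nat_mult)
qed
lemma iL: "int L = int l - 1" using Ll l2 by simp
lemma iN1: "int N1 = (int c - int b - 2) mod int l"
proof -
  have "1 \<le> n" using nn La L1 by simp
  then have "int N1 = (int n - 1) mod int l" unfolding N1_def by (simp add: of_nat_mod of_nat_diff)
  also have "\<dots> = (int c - int b - 2) mod int l"
    by (rule modeq[where k = "int (a div l) + int b + 1"]) (simp add: nn ia iL algebra_simps)
  finally show ?thesis .
qed

lemma m2: "(- 2) mod int l = int l - 2"
proof -
  have "(- 2) mod int l = (int l - 2) mod int l" by (rule modeq[where k = "-1"]) simp
  also have "\<dots> = int l - 2" using l2 by (intro mod_pos_pos_trivial) auto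
  finally show ?thesis .
qed

lemma rA3: "residue l (b + 3, 1) = int X"
proof -
  show ?thesis unfolding residue_def iX by (rule mcong) simp
qed
lemma rRm: "residue l (b + 1, L) = int X" unfolding residue_def iX
  by (simp, rule modeq[where k = 1]) (simp add: iL)
lemma rA2': "residue l (b + 2, c + 1) = int Y" unfolding residue_def iY by simp
lemma rR2: "residue l (b + 2, c) = int N1"
proof -
  show ?thesis unfolding residue_def iN1 by (rule mcong) simp
qed
lemma rA2: "residue l (2, L + 1) = int (l - 2)" unfolding residue_def using l2 iL m2 by (simp add: of_nat_diff)
lemma rA1: "residue l (1, a + 1) = int (l - 1)" unfolding residue_def using l2 amod Ll
  by (simp add: of_nat_mod[symmetric] of_nat_diff)
lemma rR1: "residue l (1, a) = int (l - 2)"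
proof -
  have "(int a - int 1) mod int l = (int L - 1) mod int l"
    by (rule modeq[where k = "int (a div l)"]) (simp add: ia algebra_simps)
  then show ?thesis unfolding residue_def using l2 iL m2 by (simp add: of_nat_diff)
qed

lemma dvd_small: "l dvd x \<Longrightarrow> 0 < x \<Longrightarrow> x < l \<Longrightarrow> False"
  using dvd_imp_le by fastforce

lemma d1: "0 < c \<Longrightarrow> N1 \<noteq> X"
proof
  assume c: "0 < c" and e: "N1 = X"
  then have "(int c - int b - 2) mod int l = (- int b - 2) mod int l" using iN1 iX by simp
  then have "int l dvd int c" by (simp add: mod_eq_dvd_iff)
  then have "l dvd c" by simp
  moreover have "c < l" using cL Ll by simp
  ultimately show False using dvd_small[of c] c by blast
qed
lemma d2: "Y \<noteq> X"
proof
  assume e: "Y = X"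
  then have "(int c - int b - 1) mod int l = (- int b - 2) mod int l" using iY iX by simp
  then have "int l dvd (int c + 1)" by (simp add: mod_eq_dvd_iff)
  then have "l dvd c + 1" by (metis of_nat_dvd_iff of_nat_1 of_nat_add)
  moreover have "c + 1 < l" using cL Ll by simp
  ultimately show False using dvd_small[of "c + 1"] by simp
qed
lemma d3: "Y \<noteq> N1"
proof
  assume e: "Y = N1"
  then have "(int c - int b - 1) mod int l = (int c - int b - 2) mod int l" using iY iN1 by simp
  then have "int l dvd 1" by (simp add: mod_eq_dvd_iff)
  then show False using l2 by simp
qed
lemma d5: "b = 0 \<Longrightarrow> X = l - 2"
proof -
  assume b: "b = 0"
  show ?thesis using b l2 m2 unfolding X_def by simp
qed
lemma d6: "b = 0 \<Longrightarrow> 0 < c \<Longrightarrow> N1 \<noteq> l - 2"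
  using d5 d1 by simp
lemma d7: "c = 0 \<Longrightarrow> N1 = X" using iN1 iX by simp

end


lemma filter_if1: "filter P (if C then [x] else []) = (if C \<and> P x then [x] else [])" by (cases C) auto
context shape2 begin
lemma swC: assumes c: "0 < c" and b: "2 \<le> b"
  shows "sig_word l j p = (if X = j then [(Add, (b + 3, 1))] else []) @ (if Y = j then [(Add, (b + 2, c + 1))] else [])
     @ (if N1 = j then [(Rem, (b + 2, c))] else []) @ (if X = j then [(Rem, (b + 1, L))] else [])
     @ (if L < a \<and> l - 2 = j then [(Add, (2, L + 1))] else []) @ (if l - 1 = j then [(Add, (1, a + 1))] else [])
     @ (if L < a \<and> l - 2 = j then [(Rem, (1, a))] else [])"
proof -
  have bb: "(if b = 0 then c else L) = L" using b by simp
  show ?thesis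
  unfolding sig_word_fw[OF P] W fw3 fw2 fw1 Mid2[OF b] bb
  using c b apply (simp only: filter_append filter.simps snd_conv filter_if1 if_True simp_thms
     rA3 rRm rA2' rR2 rA2 rA1 rR1 of_nat_eq_iff append_assoc)
  done
qed

lemma gbC: assumes c: "0 < c" and b: "2 \<le> b"
  shows "good_box l j p = (if j = N1 then Some (b + 2, c) else None)"
proof -
  have dd: "N1 \<noteq> X" "Y \<noteq> X" "Y \<noteq> N1" "X \<noteq> N1" "X \<noteq> Y" "N1 \<noteq> Y" using d1 d2 d3 c by auto
  have ll: "l - 2 \<noteq> l - 1" using l2 by simp
  consider "j = N1" | "j = X" | "j \<noteq> N1" "j \<noteq> X" by blast
  then show ?thesis
  proof cases
    case 1
    then show ?thesis unfolding good_box_def swC[OF c b] using dd ll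
      by (simp add: reduce_word_def del_step_def Let_def)
  next
    case 2
    then show ?thesis unfolding good_box_def swC[OF c b] using dd ll
      by (simp add: reduce_word_def del_step_def Let_def)
  next
    case 3
    then show ?thesis unfolding good_box_def swC[OF c b] using dd ll
      by (simp add: reduce_word_def del_step_def Let_def)
  qed
qed

lemma d8: "b = 1 \<Longrightarrow> X \<noteq> l - 2"
proof
  assume b: "b = 1" and e: "X = l - 2"
  have "(- 3) mod int l = (- 2) mod int l" using e iX m2 b l2 by (simp add: of_nat_diff)
  then have "int l dvd 1" by (simp add: mod_eq_dvd_iff)
  then show False using l2 by simp
qed

lemma swA: assumes c: "0 < c" and b: "b = 0"
  shows "sig_word l j p = (if X = j then [(Add, (b + 3, 1))] else []) @ (if Y = j then [(Add, (b + 2, c + 1))] else [])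
     @ (if N1 = j then [(Rem, (b + 2, c))] else [])
     @ (if l - 1 = j then [(Add, (1, a + 1))] else [])
     @ (if l - 2 = j then [(Rem, (1, a))] else [])"
proof -
  have bb: "((if b = 0 then c else L) < a) = True" using b cL La by simp
  have cc: "(0 < c) = True" using c by simp
  show ?thesis
  unfolding sig_word_fw[OF P] W fw3 fw2 fw1 Mid0[OF b] bb cc
  by (simp only: filter_append filter.simps snd_conv filter_if1 if_True simp_thms
     rA3 rRm rA2' rR2 rA2 rA1 rR1 of_nat_eq_iff append_assoc append_Nil)
qed

lemma swB: assumes c: "0 < c" and b: "b = 1"
  shows "sig_word l j p = (if X = j then [(Add, (b + 3, 1))] else []) @ (if Y = j then [(Add, (b + 2, c + 1))] else [])
     @ (if N1 = j then [(Rem, (b + 2, c))] else [])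
     @ (if L < a \<and> l - 2 = j then [(Add, (2, L + 1))] else []) @ (if X = j then [(Rem, (b + 1, L))] else [])
     @ (if l - 1 = j then [(Add, (1, a + 1))] else [])
     @ (if L < a \<and> l - 2 = j then [(Rem, (1, a))] else [])"
proof -
  have bb: "(if b = 0 then c else L) = L" using b by simp
  have m: "concat (map (fw p) (rev [2..<b + 2])) = (if L < a then [(Add, (2, L + 1))] else []) @ [(Rem, (b + 1, L))]"
    using Mid1[OF b] b by simp
  have cc: "(0 < c) = True" using c by simp
  show ?thesis
  unfolding sig_word_fw[OF P] W fw3 fw2 fw1 m bb cc
  by (simp only: filter_append filter.simps snd_conv filter_if1 if_True simp_thms
     rA3 rRm rA2' rR2 rA2 rA1 rR1 of_nat_eq_iff append_assoc)
qed

lemma swD: assumes c: "c = 0" and b: "b = 1"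
  shows "sig_word l j p = (if Y = j then [(Add, (b + 2, c + 1))] else [])
     @ (if L < a \<and> l - 2 = j then [(Add, (2, L + 1))] else []) @ (if X = j then [(Rem, (b + 1, L))] else [])
     @ (if l - 1 = j then [(Add, (1, a + 1))] else [])
     @ (if L < a \<and> l - 2 = j then [(Rem, (1, a))] else [])"
proof -
  have bb: "(if b = 0 then c else L) = L" using b by simp
  have m: "concat (map (fw p) (rev [2..<b + 2])) = (if L < a then [(Add, (2, L + 1))] else []) @ [(Rem, (b + 1, L))]"
    using Mid1[OF b] b by simp
  have cc: "(0 < c) = False" using c by simp
  show ?thesis
  unfolding sig_word_fw[OF P] W fw3 fw2 fw1 m bb cc
  by (simp only: filter_append filter.simps snd_conv filter_if1 if_True if_False simp_thms
     rA3 rRm rA2' rR2 rA2 rA1 rR1 of_nat_eq_iff append_assoc append_Nil append_Nil2)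
qed

lemma swE: assumes c: "c = 0" and b: "2 \<le> b"
  shows "sig_word l j p = (if Y = j then [(Add, (b + 2, c + 1))] else [])
     @ (if X = j then [(Rem, (b + 1, L))] else [])
     @ (if L < a \<and> l - 2 = j then [(Add, (2, L + 1))] else [])
     @ (if l - 1 = j then [(Add, (1, a + 1))] else [])
     @ (if L < a \<and> l - 2 = j then [(Rem, (1, a))] else [])"
proof -
  have bb: "(if b = 0 then c else L) = L" using b by simp
  have cc: "(0 < c) = False" using c by simp
  show ?thesis
  unfolding sig_word_fw[OF P] W fw3 fw2 fw1 Mid2[OF b] bb cc
  by (simp only: filter_append filter.simps snd_conv filter_if1 if_True if_False simp_thms
     rA3 rRm rA2' rR2 rA2 rA1 rR1 of_nat_eq_iff append_assoc append_Nil append_Nil2)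
qed

lemma gbA: assumes c: "0 < c" and b: "b = 0"
  shows "good_box l j p = (if j = N1 then Some (b + 2, c) else None)"
proof -
  have dd: "Y \<noteq> X" "Y \<noteq> N1" "X \<noteq> Y" "N1 \<noteq> Y" using d2 d3 by auto
  have ll: "l - 2 \<noteq> l - 1" using l2 by simp
  have ex: "X = l - 2" "N1 \<noteq> l - 2" "N1 \<noteq> X" "X \<noteq> N1" using d5 d6 d1 c b by auto
  consider "j = N1" | "j = X" | "j \<noteq> N1" "j \<noteq> X" by blast
  then show ?thesis
  proof cases
    case 1
    then show ?thesis unfolding good_box_def swA[OF c b] using dd ll ex
      by (simp add: reduce_word_def del_step_def Let_def)
  next
    case 2
    then show ?thesis unfolding good_box_def swA[OF c b] using dd ll ex
      by (simp add: reduce_word_def del_step_def Let_def)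
  next
    case 3
    then show ?thesis unfolding good_box_def swA[OF c b] using dd ll ex
      by (simp add: reduce_word_def del_step_def Let_def)
  qed
qed

lemma gbB: assumes c: "0 < c" and b: "b = 1"
  shows "good_box l j p = (if j = N1 then Some (b + 2, c) else None)"
proof -
  have dd: "Y \<noteq> X" "Y \<noteq> N1" "X \<noteq> Y" "N1 \<noteq> Y" using d2 d3 by auto
  have ll: "l - 2 \<noteq> l - 1" using l2 by simp
  have ex: "X \<noteq> l - 2" "N1 \<noteq> X" "X \<noteq> N1" using d8 d1 c b by auto
  consider "j = N1" | "j = X" | "j \<noteq> N1" "j \<noteq> X" by blast
  then show ?thesis
  proof cases
    case 1
    then show ?thesis unfolding good_box_def swB[OF c b] using dd ll ex
      by (simp add: reduce_word_def del_step_def Let_def)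
  next
    case 2
    then show ?thesis unfolding good_box_def swB[OF c b] using dd ll ex
      by (simp add: reduce_word_def del_step_def Let_def)
  next
    case 3
    then show ?thesis unfolding good_box_def swB[OF c b] using dd ll ex
      by (simp add: reduce_word_def del_step_def Let_def)
  qed
qed

lemma gbD: assumes c: "c = 0" and b: "b = 1"
  shows "good_box l j p = (if j = N1 then Some (b + 1, L) else None)"
proof -
  have dd: "Y \<noteq> X" "Y \<noteq> N1" "X \<noteq> Y" "N1 \<noteq> Y" using d2 d3 by auto
  have ll: "l - 2 \<noteq> l - 1" using l2 by simp
  have ex: "X \<noteq> l - 2" "N1 = X" using d8 d7 c b by auto
  consider "j = N1" | "j = X" | "j \<noteq> N1" "j \<noteq> X" by blast
  then show ?thesis
  proof cases
    case 1
    then show ?thesis unfolding good_box_def swD[OF c b] using dd ll ex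
      by (simp add: reduce_word_def del_step_def Let_def)
  next
    case 2
    then show ?thesis unfolding good_box_def swD[OF c b] using dd ll ex
      by (simp add: reduce_word_def del_step_def Let_def)
  next
    case 3
    then show ?thesis unfolding good_box_def swD[OF c b] using dd ll ex
      by (simp add: reduce_word_def del_step_def Let_def)
  qed
qed

lemma gbE: assumes c: "c = 0" and b: "2 \<le> b"
  shows "good_box l j p = (if j = N1 then Some (b + 1, L) else None)"
proof -
  have dd: "Y \<noteq> X" "Y \<noteq> N1" "X \<noteq> Y" "N1 \<noteq> Y" using d2 d3 by auto
  have ll: "l - 2 \<noteq> l - 1" using l2 by simp
  have ex: "N1 = X" using d7 c by auto
  consider "j = N1" | "j = X" | "j \<noteq> N1" "j \<noteq> X" by blast
  then show ?thesis
  proof cases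
    case 1
    then show ?thesis unfolding good_box_def swE[OF c b] using dd ll ex
      by (simp add: reduce_word_def del_step_def Let_def)
  next
    case 2
    then show ?thesis unfolding good_box_def swE[OF c b] using dd ll ex
      by (simp add: reduce_word_def del_step_def Let_def)
  next
    case 3
    then show ?thesis unfolding good_box_def swE[OF c b] using dd ll ex
      by (simp add: reduce_word_def del_step_def Let_def)
  qed
qed

end


context shape2 begin

lemma gb: "good_box l j p = (if j = N1 then Some (if 0 < c then (b + 2, c) else (b + 1, L)) else None)"
proof (cases "0 < c")
  case True
  consider "b = 0" | "b = 1" | "2 \<le> b" by arith
  then show ?thesis using gbA[OF True] gbB[OF True] gbC[OF True] True by cases auto
next
  case False
  then have c: "c = 0" by simp
  have "1 \<le> b" using nz c by simp
  then consider "b = 1" | "2 \<le> b" by arith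
  then show ?thesis using gbD[OF c] gbE[OF c] c by cases auto
qed

lemma rb1: "0 < c \<Longrightarrow> remove_box p (b + 2, c) = shp L a b (c - 1)"
  using La L1 by (simp add: remove_box_def shp_def list_update_append nth_append filter_replicate)

lemma rb2: assumes "c = 0" shows "remove_box p (b + 1, L) = shp L a (b - 1) (L - 1)"
proof -
  have b: "1 \<le> b" using nz assms by simp
  obtain k where k: "b = Suc k" using b by (cases b) auto
  define xs where "xs = a # replicate k L"
  have lx: "length xs = b" unfolding xs_def k by simp
  have e1: "p = xs @ [L]" unfolding xs_def shp_def k using assms by (simp add: replicate_append_same)
  have "remove_box p (b + 1, L) = filter (\<lambda>x. 0 < x) ((xs @ [L])[length xs := L - 1])"
  proof -
    have nb: "(xs @ [L]) ! b = L" using lx nth_append_length[of xs L] by simp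
    show ?thesis unfolding remove_box_def e1 using nb lx by simp
  qed
  also have "\<dots> = filter (\<lambda>x. 0 < x) xs @ filter (\<lambda>x. 0 < x) [L - 1]"
    by (simp only: list_update_length filter_append)
  also have "\<dots> = shp L a (b - 1) (L - 1)" unfolding xs_def shp_def k using La L1
    by (simp add: filter_replicate)
  finally show ?thesis .
qed

lemma et: "etilde l j p = (if j = N1 then Some (if 0 < c then shp L a b (c - 1) else shp L a (b - 1) (L - 1)) else None)"
proof (cases "0 < c")
  case True
  then show ?thesis unfolding etilde_def gb using rb1[OF True] by simp
next
  case False
  then have c: "c = 0" by simp
  show ?thesis unfolding etilde_def gb using rb2[OF c] c by simp
qed

end



lemma mu_shape:
  assumes l2: "2 \<le> l" and i: "1 \<le> i" "i \<le> n div l"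
  defines "a \<equiv> (l - 1) + (n div l - i) * l"
  defines "b \<equiv> (n - a) div (l - 1)" and "c \<equiv> (n - a) mod (l - 1)"
  shows "mu l n i = shp (l - 1) a b c \<and> shape2 (l - 1) a b c l n"
proof -
  have m1: "mu l n i = shp (l - 1) a b c"
    using i unfolding mu_def shp_def a_def b_def c_def Let_def by simp
  have "(n div l - i) * l + l \<le> n div l * l"
  proof -
    have "(n div l - i) * l + l = (n div l - i + 1) * l" by simp
    also have "\<dots> \<le> n div l * l" using i by (intro mult_le_mono1) arith
    finally show ?thesis .
  qed
  moreover have "n div l * l \<le> n" by (simp add: div_times_less_eq_dividend)
  ultimately have an: "a + 1 \<le> n" unfolding a_def using l2 by arith
  have L1: "1 \<le> l - 1" using l2 by simp
  have cL: "c < l - 1" unfolding c_def using L1 by simp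
  have La: "l - 1 \<le> a" unfolding a_def by simp
  have amod: "a mod l = l - 1" unfolding a_def using l2 by (subst mod_mult_self1) simp
  have dm: "n - a = b * (l - 1) + c" unfolding b_def c_def by (rule div_mult_mod_eq[symmetric])
  have nn: "n = a + b * (l - 1) + c" using dm an by arith
  have nz: "1 \<le> b \<or> 0 < c" using dm an by (cases b) auto
  have "shape2 (l - 1) a b c l n"
    unfolding shape2_def shape2_axioms_def shape_def
    using L1 cL amod nn nz l2 La by blast
  then show ?thesis using m1 by simp
qed

lemma mod_pred: fixes n l :: nat assumes "1 \<le> n" "1 \<le> l"
  shows "(n - 1) mod l = (if n mod l = 0 then l - 1 else n mod l - 1)"
    and "(n - 1) div l = (if n mod l = 0 then n div l - 1 else n div l)"
proof -
  obtain m where m: "n = Suc m" using assms by (cases n) auto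
  show "(n - 1) mod l = (if n mod l = 0 then l - 1 else n mod l - 1)"
    unfolding m using assms by (auto simp: mod_Suc)
  show "(n - 1) div l = (if n mod l = 0 then n div l - 1 else n div l)"
    unfolding m using assms by (auto simp: mod_Suc div_Suc)
qed

lemma res_mu:
  assumes l2: "2 \<le> l" and i: "1 \<le> i" "i \<le> n div l"
    and a: "a = (l - 1) + (n div l - i) * l" and s: "a + B * (l - 1) + G = n - 1" and G: "G < l - 1"
  shows "shp (l - 1) a B G = mu l (n - 1) (if n mod l = 0 then i - 1 else i)"
proof -
  have n1: "1 \<le> n" using i l2 by (metis div_le_dividend le_trans)
  note mp = mod_pred[OF n1, of l]
  show ?thesis
  proof (cases "n mod l = 0 \<and> i = 1")
    case True
    have nq: "n = n div l * l" using True div_mult_mod_eq[of n l] by simp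
    obtain q where q: "n div l = Suc q" using i by (cases "n div l") auto
    have "a + 1 = n" unfolding a using True l2 q by (subst nq) (simp add: q)
    then have "B * (l - 1) + G = 0" using s by linarith
    then have "B = 0" "G = 0" using l2 by auto
    then show ?thesis using True \<open>a + 1 = n\<close> l2 unfolding shp_def mu_def by auto
  next
    case False
    define i' where "i' = (if n mod l = 0 then i - 1 else i)"
    have i1: "1 \<le> i'" using False i unfolding i'_def by auto
    have q: "(n - 1) div l - i' = n div l - i" unfolding i'_def using mp(2) l2 i by auto
    have m: "n - 1 - a = B * (l - 1) + G" using s by simp
    have bd: "(B * (l - 1) + G) div (l - 1) = B" "(B * (l - 1) + G) mod (l - 1) = G" using G by auto
    have e: "(l - 1) + ((n - 1) div l - i') * l = a" unfolding q a ..
    have "mu l (n - 1) i' = a # replicate ((n - 1 - a) div (l - 1)) (l - 1)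
        @ (if (n - 1 - a) mod (l - 1) = 0 then [] else [(n - 1 - a) mod (l - 1)])"
      using i1 unfolding mu_def Let_def e by simp
    also have "\<dots> = shp (l - 1) a B G" unfolding m bd shp_def ..
    finally show ?thesis unfolding i'_def by simp
  qed
qed




lemma et_single:
  assumes l2: "2 \<le> l" and n1: "1 \<le> n"
  shows "etilde l j [n] = (if j = (n - 1) mod l \<and> n mod l \<noteq> 0 then Some (mu l (n - 1) 0) else None)"
proof -
  have P: "is_partition [n]" using n1 by (simp add: is_partition_def)
  have rl: "rowlen [n] r = (if r = 1 then n else 0)" for r by (simp add: rowlen_def)
  have f2: "fw [n] 2 = [(Add, (2, 1))]" unfolding fw_def addc_def remc_def rl using n1 by simp
  have f1: "fw [n] 1 = [(Add, (1, n + 1)), (Rem, (1, n))]" unfolding fw_def addc_def remc_def rl using n1 by simp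
  have rws: "rev [1..<length [n] + 2] = [2, 1]" by (simp add: numeral_eq_Suc)
  have r1: "residue l (2, 1) = int (l - 1)"
  proof -
    have "(- 1) mod int l = (int l - 1) mod int l" by (rule modeq[where k = "-1"]) simp
    also have "\<dots> = int l - 1" using l2 by (intro mod_pos_pos_trivial) auto
    finally show ?thesis unfolding residue_def using l2 by (simp add: of_nat_diff)
  qed
  have r2: "residue l (1, n + 1) = int (n mod l)" unfolding residue_def by (simp add: of_nat_mod)
  have r3: "residue l (1, n) = int ((n - 1) mod l)" unfolding residue_def using n1
    by (simp add: of_nat_mod of_nat_diff)
  have sw: "sig_word l j [n] = (if l - 1 = j then [(Add, (2, 1))] else []) @ (if n mod l = j then [(Add, (1, n + 1))] else [])
      @ (if (n - 1) mod l = j then [(Rem, (1, n))] else [])"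
    unfolding sig_word_fw[OF P] rws by (simp only: list.map concat.simps f1 f2 filter.simps filter_append snd_conv
      r1 r2 r3 of_nat_eq_iff append_Nil2 append.simps) simp
  have l1: "1 \<le> l" using l2 by simp
  note mp = mod_pred[OF n1 l1]
  have ml: "n mod l < l" using l2 by simp
  have q1: "n mod l \<noteq> (n - 1) mod l" using mp(1) l2 by auto
  have q2: "n mod l = 0 \<Longrightarrow> (n - 1) mod l = l - 1" using mp(1) by simp
  have q3: "n mod l \<noteq> 0 \<Longrightarrow> (n - 1) mod l \<noteq> l - 1" using mp(1) ml by auto
  have gb: "good_box l j [n] = (if j = (n - 1) mod l \<and> n mod l \<noteq> 0 then Some (1, n) else None)"
  proof (cases "n mod l = 0")
    case True
    then show ?thesis unfolding good_box_def sw using q1 q2 l2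
      by (simp add: reduce_word_def del_step_def Let_def)
  next
    case False
    then show ?thesis unfolding good_box_def sw using q1 q3 l2
      by (simp add: reduce_word_def del_step_def Let_def)
  qed
  have rb: "remove_box [n] (1, n) = mu l (n - 1) 0" by (simp add: remove_box_def mu_def)
  show ?thesis unfolding etilde_def gb using rb by simp
qed

lemma et_nil: "etilde l j [] = None"
proof -
  have P: "is_partition []" by (simp add: is_partition_def)
  have f1: "fw [] (Suc 0) = [(Add, (1, 1))]" unfolding fw_def addc_def remc_def rowlen_def by simp
  have rws: "rev [1..<length ([]::nat list) + 2] = [1]" by (simp add: numeral_eq_Suc)
  show ?thesis unfolding etilde_def good_box_def sig_word_fw[OF P] rws
    by (simp add: f1 reduce_word_def del_step_def)
qed

lemma pow_None: fixes f :: "'a \<Rightarrow> 'a option" shows "((\<lambda>x. Option.bind x f) ^^ k) None = None"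
  by (induction k) auto

lemma pow_Suc: "etilde_pow l j (Suc k) la = (case etilde l j la of None \<Rightarrow> None | Some la' \<Rightarrow> etilde_pow l j k la')"
  unfolding etilde_pow_def funpow_Suc_right comp_def by (cases "etilde l j la") (auto simp: pow_None)

lemma eps0: assumes "etilde l j la = None" shows "epsilon l j la = 0"
  unfolding epsilon_def
proof (rule Greatest_equality)
  show "etilde_pow l j 0 la \<noteq> None" by (simp add: etilde_pow_def)
  fix y assume "etilde_pow l j y la \<noteq> None"
  then show "y \<le> 0" using assms by (cases y) (auto simp: pow_Suc)
qed

lemma eps1: assumes "etilde l j la = Some la'" "etilde l j la' = None" shows "epsilon l j la = 1"
  unfolding epsilon_def
proof (rule Greatest_equality)
  have "etilde_pow l j (Suc 0) la = Some la'" using assms by (simp add: pow_Suc) (simp add: etilde_pow_def)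
  then show "etilde_pow l j 1 la \<noteq> None" by simp
  fix y assume h: "etilde_pow l j y la \<noteq> None"
  show "y \<le> 1"
  proof (rule ccontr)
    assume "\<not> y \<le> 1"
    then have y: "y = Suc (Suc (y - 2))" by simp
    have "etilde_pow l j (Suc (Suc (y - 2))) la = None" using assms by (simp add: pow_Suc)
    then show False using h y by simp
  qed
qed




lemma main:
  assumes l2: "2 \<le> l" and n1: "1 \<le> n" and i: "i \<le> n div l"
  shows "etilde l j (mu l n i) = (if j = (n - 1) mod l \<and> (1 \<le> i \<or> n mod l \<noteq> 0)
            then Some (mu l (n - 1) (if n mod l = 0 then i - 1 else i)) else None)"
proof (cases "i = 0")
  case True
  have "mu l n i = [n]" using True n1 by (simp add: mu_def)
  then show ?thesis using et_single[OF l2 n1, of j] True by simp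
next
  case False
  then have i1: "1 \<le> i" by simp
  define a where "a = (l - 1) + (n div l - i) * l"
  define b where "b = (n - a) div (l - 1)"
  define c where "c = (n - a) mod (l - 1)"
  have ms: "mu l n i = shp (l - 1) a b c" "shape2 (l - 1) a b c l n"
    using mu_shape[OF l2 i1 i] unfolding a_def b_def c_def by auto
  interpret S: shape2 "l - 1" a b c l n by (rule ms(2))
  have N1: "S.N1 = (n - 1) mod l" by (simp add: S.N1_def)
  have res: "(if 0 < c then shp (l - 1) a b (c - 1) else shp (l - 1) a (b - 1) (l - 1 - 1))
      = mu l (n - 1) (if n mod l = 0 then i - 1 else i)"
  proof (cases "0 < c")
    case True
    have "a + b * (l - 1) + (c - 1) = n - 1" using S.nn True by simp
    moreover have "c - 1 < l - 1" using S.cL by simp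
    ultimately show ?thesis using res_mu[OF l2 i1 i a_def] True by simp
  next
    case False
    then have c0: "c = 0" by simp
    have "1 \<le> b" using S.nz c0 by simp
    then obtain k where k: "b = Suc k" by (cases b) auto
    have "a + b * (l - 1) + (l - 1 - 1) = n - 1 + (l - 1)" using S.nn c0 l2 S.La by arith
    then have "a + k * (l - 1) + (l - 1 - 1) = n - 1" unfolding k by simp
    moreover have "l - 1 - 1 < l - 1" using l2 by simp
    ultimately show ?thesis using res_mu[OF l2 i1 i a_def] c0 k by simp
  qed
  show ?thesis unfolding ms(1) S.et N1 res using i1 by simp
qed

lemma eps_mu:
  assumes l2: "2 \<le> l" and n1: "1 \<le> n" and i: "i \<le> n div l"
  shows "epsilon l j (mu l n i) = (if j = (n - 1) mod l \<and> (1 \<le> i \<or> n mod l \<noteq> 0) then 1 else 0)"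
proof (cases "j = (n - 1) mod l \<and> (1 \<le> i \<or> n mod l \<noteq> 0)")
  case False
  then show ?thesis using main[OF assms, of j] eps0 by simp
next
  case True
  define i' where "i' = (if n mod l = 0 then i - 1 else i)"
  have e1: "etilde l j (mu l n i) = Some (mu l (n - 1) i')" using main[OF assms, of j] True i'_def by simp
  have l1: "1 \<le> l" using l2 by simp
  have "etilde l j (mu l (n - 1) i') = None"
  proof (cases "n = 1")
    case True
    then have "i = 0" using i l2 by simp
    then have "i' = 0" unfolding i'_def by simp
    then show ?thesis using True et_nil by (simp add: mu_def)
  next
    case False
    then have n2: "1 \<le> n - 1" using n1 by simp
    have i': "i' \<le> (n - 1) div l" using mod_pred(2)[OF n1 l1] i unfolding i'_def by auto
    have "(n - 1 - 1) mod l \<noteq> (n - 1) mod l" using mod_pred(1)[OF n2 l1] l2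
      by (cases "(n - 1) mod l = 0") auto
    then show ?thesis using main[OF l2 n2 i', of j] True by simp
  qed
  then show ?thesis using eps1[OF e1] True by simp
qed


theorem lemma6p8:
  fixes l n :: nat
  assumes "l \<ge> 2" and "n \<ge> 1"
  defines "N \<equiv> n div l"
  shows
   "(n mod l \<noteq> 0 \<longrightarrow>
       (\<forall>i\<le>N. \<forall>j<l. etilde l j (mu l n i) =
          (if j = (n - 1) mod l then Some (mu l (n - 1) i) else None)))
  \<and> (n mod l = 0 \<longrightarrow>
       (\<forall>i. 1 \<le> i \<and> i \<le> N \<longrightarrow> (\<forall>j<l. etilde l j (mu l n i) =
          (if j = (n - 1) mod l then Some (mu l (n - 1) (i - 1)) else None)))
     \<and> (\<forall>j<l. etilde l j (mu l n 0) = None))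
  \<and> (\<forall>i. 1 \<le> i \<and> i \<le> N \<longrightarrow> (\<forall>j<l. epsilon l j (mu l n i) =
          (if j = (n - 1) mod l then 1 else 0)))
  \<and> (\<forall>j<l. epsilon l j (mu l n 0) =
          (if j = (n - 1) mod l \<and> n mod l \<noteq> 0 then 1 else 0))"
  proof -
  have n1: "1 \<le> n" using assms by simp
  have l2: "2 \<le> l" using assms by simp
  have M: "\<And>i j. i \<le> N \<Longrightarrow> etilde l j (mu l n i) = (if j = (n - 1) mod l \<and> (1 \<le> i \<or> n mod l \<noteq> 0)
            then Some (mu l (n - 1) (if n mod l = 0 then i - 1 else i)) else None)"
    unfolding N_def using main[OF l2 n1] by blast
  have E: "\<And>i j. i \<le> N \<Longrightarrow> epsilon l j (mu l n i) = (if j = (n - 1) mod l \<and> (1 \<le> i \<or> n mod l \<noteq> 0) then 1 else 0)"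
    unfolding N_def using eps_mu[OF l2 n1] by blast
  show ?thesis
  proof (intro conjI impI allI)
    fix i j assume "n mod l \<noteq> 0" "i \<le> N" "j < l"
    then show "etilde l j (mu l n i) = (if j = (n - 1) mod l then Some (mu l (n - 1) i) else None)"
      using M by simp
  next
    fix i j assume "n mod l = 0" "1 \<le> i \<and> i \<le> N" "j < l"
    then show "etilde l j (mu l n i) = (if j = (n - 1) mod l then Some (mu l (n - 1) (i - 1)) else None)"
      using M by simp
  next
    fix j assume "n mod l = 0" "j < l"
    then show "etilde l j (mu l n 0) = None" using M[of 0 j] by simp
  next
    fix i j assume "1 \<le> i \<and> i \<le> N" "j < l"
    then show "epsilon l j (mu l n i) = (if j = (n - 1) mod l then 1 else 0)" using E by simp
  next
    fix j assume "j < l"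
    then show "epsilon l j (mu l n 0) = (if j = (n - 1) mod l \<and> n mod l \<noteq> 0 then 1 else 0)"
      using E[of 0 j] by simp
  qed
qed

end
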